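(* Let $\rho$ be an indecomposable representation of $D^{2,2,2}$, and for $a\in D^{2,2,2}$ write $$S(a)=\sum_{p=1}^3\varphi_p(\Phi^+\rho(a))\subseteq X_0.$$ 1. If $v_1,v_2,v_3\in D^{2,2,2}$ are perfect, then $S(v_1v_2v_3)=S(v_1)\cap S(v_2)\cap S(v_3)$. 2. If $v$ is perfect and $u\in D^{2,2,2}$ is arbitrary, then $S(vu)=S(v)\cap S(u)$.
   Context: $D^{2,2,2}$ is the modular lattice generated by $x_1,y_1,x_2,y_2,x_3,y_3$ subject only to $x_i\subseteq y_i$ ($i=1,2,3$), with a greatest element $I$ adjoined. Meet is written $ab$, join $a+b$. A representation $\rho$ of $D^{2,2,2}$ in a finite-dimensional vector space $X_0$ is a lattice morphism from $D^{2,2,2}$ to the subspace lattice of $X_0$, with $\rho(I)=X_0$. Write $X_i=\rho(x_i)\subseteq Y_i=\rho(y_i)$. $\rho$ is indecomposable if $X_0\neq0$ and there is no decomposition $X_0=X'\oplus X''$ with $X',X''\neq0$ and $\rho(a)=(\rho(a)\cap X')+(\rho(a)\cap X'')$ for all $a$. An element $a$ is perfect if $\rho(a)\in\{0,X_0\}$ for every indecomposable $\rho$. Put $R=Y_1\oplus Y_2\oplus Y_3$ and $X^1_0=\{(\eta_1,\eta_2,\eta_3)\in R:\sum\eta_i=0\}$. Let $G'_i\subseteq R$ be the triples with $i$-th coordinate in $X_i$, and $H'_i\subseteq R$ the triples with $i$-th coordinate $0$. $\Phi^+\rho$ is the representation in $X^1_0$ with $\Phi^+\rho(y_i)=G'_i\cap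 X^1_0$, $\Phi^+\rho(x_i)=H'_i\cap X^1_0$, $\Phi^+\rho(I)=X^1_0$. The elementary map $\varphi_p:X^1_0\to X_0$ is $(\eta_1,\eta_2,\eta_3)\mapsto\eta_p$; $\varphi_p(S)$ denotes the image of a subspace $S$. *)

theory Defs
  imports Complex_Main "HOL-Library.Product_Plus" "HOL-Library.Function_Algebras"
begin

datatype idx = i1 | i2 | i3

text \<open>Elements of D222 are represented by terms; every notion below depends only
  on the value of a term under representations, hence only on the element of
  the free modular lattice (modulo x_i <= y_i) that the term denotes.\<close>
datatype lt = Xg idx | Yg idx | Top | Meet lt lt | Join lt lt

definition ssum :: "'w::plus set \<Rightarrow> 'w set \<Rightarrow> 'w set" where
  "ssum A B = {a + b | a b. a \<in> A \<and> b \<in> B}"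

fun ev :: "'w::plus set \<Rightarrow> (idx \<Rightarrow> 'w set) \<Rightarrow> (idx \<Rightarrow> 'w set) \<Rightarrow> lt \<Rightarrow> 'w set" where
  "ev X0 Xs Ys (Xg i) = Xs i"
| "ev X0 Xs Ys (Yg i) = Ys i"
| "ev X0 Xs Ys Top = X0"
| "ev X0 Xs Ys (Meet a b) = ev X0 Xs Ys a \<inter> ev X0 Xs Ys b"
| "ev X0 Xs Ys (Join a b) = ssum (ev X0 Xs Ys a) (ev X0 Xs Ys b)"

definition is_rep ::
  "('a::field \<Rightarrow> 'v::ab_group_add \<Rightarrow> 'v) \<Rightarrow> 'v set \<Rightarrow> (idx \<Rightarrow> 'v set) \<Rightarrow> (idx \<Rightarrow> 'v set) \<Rightarrow> bool" where
  "is_rep s X0 Xs Ys \<longleftrightarrow>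
     module.subspace s X0 \<and> (\<exists>B. finite B \<and> B \<subseteq> X0 \<and> module.span s B = X0) \<and>
     (\<forall>i. module.subspace s (Xs i) \<and> module.subspace s (Ys i) \<and> Xs i \<subseteq> Ys i \<and> Ys i \<subseteq> X0)"

definition indecomposable ::
  "('a::field \<Rightarrow> 'v::ab_group_add \<Rightarrow> 'v) \<Rightarrow> 'v set \<Rightarrow> (idx \<Rightarrow> 'v set) \<Rightarrow> (idx \<Rightarrow> 'v set) \<Rightarrow> bool" where
  "indecomposable s X0 Xs Ys \<longleftrightarrow>
     X0 \<noteq> {0} \<and>
     \<not> (\<exists>X' X''. module.subspace s X' \<and> module.subspace s X'' \<and>
          X' \<inter> X'' = {0} \<and> ssum X' X'' = X0 \<and> X' \<noteq> {0} \<and> X'' \<noteq> {0} \<and>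
          (\<forall>a. ev X0 Xs Ys a = ssum (ev X0 Xs Ys a \<inter> X') (ev X0 Xs Ys a \<inter> X'')))"

text \<open>Universal ambient space nat => 'a: every finite-dimensional vector space
  over 'a is isomorphic to a subspace of it.\<close>
definition uscale :: "'a::field \<Rightarrow> (nat \<Rightarrow> 'a) \<Rightarrow> (nat \<Rightarrow> 'a)" where
  "uscale c f = (\<lambda>n. c * f n)"

definition perfect :: "'a::field itself \<Rightarrow> lt \<Rightarrow> bool" where
  "perfect _ a \<longleftrightarrow>
     (\<forall>(X0 :: (nat \<Rightarrow> 'a) set) Xs Ys.
        is_rep (uscale :: 'a \<Rightarrow> _) X0 Xs Ys \<and> indecomposable (uscale :: 'a \<Rightarrow> _) X0 Xs Ys
        \<longrightarrow> ev X0 Xs Ys a \<in> {{0}, X0})"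

fun coord :: "idx \<Rightarrow> 'w \<times> 'w \<times> 'w \<Rightarrow> 'w" where
  "coord i1 (a, b, c) = a"
| "coord i2 (a, b, c) = b"
| "coord i3 (a, b, c) = c"

definition Rsp :: "(idx \<Rightarrow> 'w set) \<Rightarrow> ('w \<times> 'w \<times> 'w) set" where
  "Rsp Ys = {t. \<forall>i. coord i t \<in> Ys i}"

definition X10 :: "(idx \<Rightarrow> 'w::monoid_add set) \<Rightarrow> ('w \<times> 'w \<times> 'w) set" where
  "X10 Ys = {t \<in> Rsp Ys. coord i1 t + coord i2 t + coord i3 t = 0}"

definition Gp :: "(idx \<Rightarrow> 'w set) \<Rightarrow> (idx \<Rightarrow> 'w set) \<Rightarrow> idx \<Rightarrow> ('w \<times> 'w \<times> 'w) set" where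
  "Gp Xs Ys i = {t \<in> Rsp Ys. coord i t \<in> Xs i}"

definition Hp :: "(idx \<Rightarrow> 'w::zero set) \<Rightarrow> idx \<Rightarrow> ('w \<times> 'w \<times> 'w) set" where
  "Hp Ys i = {t \<in> Rsp Ys. coord i t = 0}"

definition PhiPlus_ev :: "(idx \<Rightarrow> 'w::monoid_add set) \<Rightarrow> (idx \<Rightarrow> 'w set) \<Rightarrow> lt \<Rightarrow> ('w \<times> 'w \<times> 'w) set" where
  "PhiPlus_ev Xs Ys a =
     ev (X10 Ys) (\<lambda>i. Hp Ys i \<inter> X10 Ys) (\<lambda>i. Gp Xs Ys i \<inter> X10 Ys) a"

definition Sset :: "(idx \<Rightarrow> 'w::monoid_add set) \<Rightarrow> (idx \<Rightarrow> 'w set) \<Rightarrow> lt \<Rightarrow> 'w set" where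
  "Sset Xs Ys a =
     ssum (ssum (coord i1 ` PhiPlus_ev Xs Ys a) (coord i2 ` PhiPlus_ev Xs Ys a))
          (coord i3 ` PhiPlus_ev Xs Ys a)"

end

theory Submission
  imports Defs
begin

definition spl :: "'b::plus set \<Rightarrow> 'b set \<Rightarrow> 'b set \<Rightarrow> bool" where
  "spl P Q U \<longleftrightarrow> U = ssum (U \<inter> P) (U \<inter> Q)"

lemma ssum_ge1: "(0::'b::monoid_add) \<in> B \<Longrightarrow> A \<subseteq> ssum A B"
proof
  fix x assume "0 \<in> B" "x \<in> A"
  hence "x = x + 0 \<and> x \<in> A \<and> 0 \<in> B" by simp
  thus "x \<in> ssum A B" unfolding ssum_def by blast
qed

lemma ssum_ge2: "(0::'b::monoid_add) \<in> A \<Longrightarrow> B \<subseteq> ssum A B"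
proof
  fix x assume "0 \<in> A" "x \<in> B"
  hence "x = 0 + x \<and> 0 \<in> A \<and> x \<in> B" by simp
  thus "x \<in> ssum A B" unfolding ssum_def by blast
qed

context module
begin

lemma ssum_subspace: "subspace A \<Longrightarrow> subspace B \<Longrightarrow> subspace (ssum A B)"
  unfolding ssum_def subspace_def
  apply (intro conjI)
    apply (metis (mono_tags, lifting) add_0 mem_Collect_eq)
   apply clarify
   apply (rule_tac x="a + aa" in exI, rule_tac x="b + ba" in exI)
   apply (simp add: algebra_simps)
  apply clarify
  apply (rule_tac x="c *s a" in exI, rule_tac x="c *s b" in exI)
  apply (simp add: algebra_simps)
  done

lemma ssum_mono: "A \<subseteq> A' \<Longrightarrow> B \<subseteq> B' \<Longrightarrow> ssum A B \<subseteq> ssum A' B'"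
  unfolding ssum_def by blast

lemma ssum_le: "subspace Z \<Longrightarrow> A \<subseteq> Z \<Longrightarrow> B \<subseteq> Z \<Longrightarrow> ssum A B \<subseteq> Z"
  unfolding ssum_def using subspace_add by blast

lemma ev_subspace:
  assumes "subspace X0" "\<And>i. subspace (Xs i)" "\<And>i. subspace (Ys i)"
  shows "subspace (ev X0 Xs Ys a)"
  by (induction a) (auto intro: assms ssum_subspace subspace_inter)

lemma ev_le:
  assumes "subspace X0" "\<And>i. Xs i \<subseteq> X0" "\<And>i. Ys i \<subseteq> X0"
  shows "ev X0 Xs Ys a \<subseteq> X0"
proof (induction a)
  case (Join a b) thus ?case using ssum_le[OF assms(1)] by simp
qed (use assms in auto)


lemma spl_meet:
  assumes P: "subspace P" and Q: "subspace Q" and PQ: "P \<inter> Q = {0}"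
    and U: "subspace U" and V: "subspace V" and sU: "spl P Q U" and sV: "spl P Q V"
  shows "spl P Q (U \<inter> V)"
  unfolding spl_def
proof
  show "U \<inter> V \<subseteq> ssum (U \<inter> V \<inter> P) (U \<inter> V \<inter> Q)"
  proof
    fix w assume w: "w \<in> U \<inter> V"
    then obtain u1 u2 where u: "u1 \<in> U \<inter> P" "u2 \<in> U \<inter> Q" "w = u1 + u2"
      using sU unfolding spl_def ssum_def by blast
    obtain v1 v2 where v: "v1 \<in> V \<inter> P" "v2 \<in> V \<inter> Q" "w = v1 + v2"
      using w sV unfolding spl_def ssum_def by blast
    have "u1 - v1 = v2 - u2" using u v by (simp add: algebra_simps)
    moreover have "u1 - v1 \<in> P" using u v P subspace_diff by blast
    moreover have "v2 - u2 \<in> Q" using u v Q subspace_diff by blast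
    ultimately have "v2 - u2 \<in> P \<inter> Q" by simp
    hence "v2 - u2 = 0" using PQ by blast
    hence "u1 = v1" "u2 = v2" using \<open>u1 - v1 = v2 - u2\<close> by auto
    thus "w \<in> ssum (U \<inter> V \<inter> P) (U \<inter> V \<inter> Q)"
      unfolding ssum_def using u v by blast
  qed
  show "ssum (U \<inter> V \<inter> P) (U \<inter> V \<inter> Q) \<subseteq> U \<inter> V"
    by (rule ssum_le[OF subspace_inter[OF U V]]) auto
qed

lemma spl_join:
  assumes P: "subspace P" and Q: "subspace Q"
    and U: "subspace U" and V: "subspace V" and sU: "spl P Q U" and sV: "spl P Q V"
  shows "spl P Q (ssum U V)"
  unfolding spl_def
proof
  have UV: "subspace (ssum U V)" using U V ssum_subspace by blast
  show "ssum U V \<subseteq> ssum (ssum U V \<inter> P) (ssum U V \<inter> Q)"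
  proof
    fix w assume "w \<in> ssum U V"
    then obtain u v where w: "u \<in> U" "v \<in> V" "w = u + v" unfolding ssum_def by blast
    obtain u1 u2 where u: "u1 \<in> U \<inter> P" "u2 \<in> U \<inter> Q" "u = u1 + u2"
      using w sU unfolding spl_def ssum_def by blast
    obtain v1 v2 where v: "v1 \<in> V \<inter> P" "v2 \<in> V \<inter> Q" "v = v1 + v2"
      using w sV unfolding spl_def ssum_def by blast
    have "u1 + v1 \<in> ssum U V \<inter> P" using u v P subspace_add unfolding ssum_def by blast
    moreover have "u2 + v2 \<in> ssum U V \<inter> Q" using u v Q subspace_add unfolding ssum_def by blast
    moreover have "w = (u1 + v1) + (u2 + v2)" using u v w by (simp add: algebra_simps)
    ultimately show "w \<in> ssum (ssum U V \<inter> P) (ssum U V \<inter> Q)" unfolding ssum_def by blast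
  qed
  show "ssum (ssum U V \<inter> P) (ssum U V \<inter> Q) \<subseteq> ssum U V"
    by (rule ssum_le[OF UV]) auto
qed

lemma spl_ev:
  assumes P: "subspace P" and Q: "subspace Q" and PQ: "P \<inter> Q = {0}"
    and sub: "subspace X0" "\<And>i. subspace (Xs i)" "\<And>i. subspace (Ys i)"
    and sp: "spl P Q X0" "\<And>i. spl P Q (Xs i)" "\<And>i. spl P Q (Ys i)"
  shows "spl P Q (ev X0 Xs Ys a)"
proof (induction a)
  case (Meet a b)
  then show ?case using spl_meet[OF P Q PQ ev_subspace[OF sub] ev_subspace[OF sub]] by simp
next
  case (Join a b)
  then show ?case using spl_join[OF P Q ev_subspace[OF sub] ev_subspace[OF sub]] by simp
qed (use sp in auto)

end

context vector_space
begin

lemma complement_exists: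
  assumes U: "subspace U" and V: "subspace V" and Z: "subspace Z"
    and UZ: "U \<subseteq> Z" and VZ: "V \<subseteq> Z" and UV: "U \<inter> V = {0}"
  shows "\<exists>V'. subspace V' \<and> V \<subseteq> V' \<and> V' \<subseteq> Z \<and> U \<inter> V' = {0} \<and> ssum U V' = Z"
proof -
  let ?A = "{W. subspace W \<and> V \<subseteq> W \<and> W \<subseteq> Z \<and> U \<inter> W = {0}}"
  have "\<exists>M\<in>?A. \<forall>X\<in>?A. M \<subseteq> X \<longrightarrow> X = M"
  proof (rule subset_Zorn)
    fix C assume ch: "subset.chain ?A C"
    show "\<exists>W\<in>?A. \<forall>X\<in>C. X \<subseteq> W"
    proof (cases "C = {}")
      case True
      then show ?thesis using U V Z UZ VZ UV by (intro bexI[of _ V]) auto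
    next
      case False
      have C: "\<And>c. c \<in> C \<Longrightarrow> c \<in> ?A" "\<And>c d. c \<in> C \<Longrightarrow> d \<in> C \<Longrightarrow> c \<subseteq> d \<or> d \<subseteq> c"
        using ch unfolding subset.chain_def by blast+
      have CA: "\<And>c. c \<in> C \<Longrightarrow> subspace c \<and> V \<subseteq> c \<and> c \<subseteq> Z \<and> U \<inter> c = {0}"
        using C(1) by simp
      obtain c0 where c0: "c0 \<in> C" using False by blast
      have "subspace (\<Union>C)"
        unfolding subspace_def
      proof (intro conjI ballI allI)
        show "0 \<in> \<Union>C" using c0 CA[OF c0] subspace_0 by blast
      next
        fix x y assume "x \<in> \<Union>C" "y \<in> \<Union>C"
        then obtain c d where cd: "c \<in> C" "d \<in> C" "x \<in> c" "y \<in> d" by blast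
        from C(2)[OF cd(1,2)] show "x + y \<in> \<Union>C"
        proof
          assume "c \<subseteq> d"
          hence "x + y \<in> d" using cd CA[OF cd(2)] subspace_add by blast
          thus ?thesis using cd(2) by blast
        next
          assume "d \<subseteq> c"
          hence "x + y \<in> c" using cd CA[OF cd(1)] subspace_add by blast
          thus ?thesis using cd(1) by blast
        qed
      next
        fix c x assume "x \<in> \<Union>C"
        then obtain d where "d \<in> C" "x \<in> d" by blast
        hence "c *s x \<in> d" using CA subspace_scale by blast
        thus "c *s x \<in> \<Union>C" using \<open>d \<in> C\<close> by blast
      qed
      moreover have "V \<subseteq> \<Union>C" using c0 CA[OF c0] by blast
      moreover have "\<Union>C \<subseteq> Z" using CA by blast
      moreover have "U \<inter> \<Union>C = {0}"
      proof
        show "U \<inter> \<Union>C \<subseteq> {0}"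
        proof
          fix x assume "x \<in> U \<inter> \<Union>C"
          then obtain d where "d \<in> C" "x \<in> d" "x \<in> U" by blast
          thus "x \<in> {0}" using CA[OF \<open>d \<in> C\<close>] by blast
        qed
        show "{0} \<subseteq> U \<inter> \<Union>C" using c0 CA[OF c0] U subspace_0 by blast
      qed
      moreover have "\<forall>X\<in>C. X \<subseteq> \<Union>C" by blast
      ultimately show ?thesis by (intro bexI[of _ "\<Union>C"]) simp_all
    qed
  qed
  then obtain M where MA: "M \<in> ?A" and max0: "\<forall>X\<in>?A. M \<subseteq> X \<longrightarrow> X = M" by (rule bexE)
  have M: "subspace M" "V \<subseteq> M" "M \<subseteq> Z" "U \<inter> M = {0}" using MA by simp_all
  have max: "\<And>X. X \<in> ?A \<Longrightarrow> M \<subseteq> X \<Longrightarrow> X = M" using max0 by blast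
  have "ssum U M = Z"
  proof
    show "ssum U M \<subseteq> Z" by (rule ssum_le[OF Z]) (use UZ M in auto)
    show "Z \<subseteq> ssum U M"
    proof (rule ccontr)
      assume "\<not> Z \<subseteq> ssum U M"
      then obtain z where z: "z \<in> Z" "z \<notin> ssum U M" by blast
      let ?M' = "span (insert z M)"
      have "?M' \<in> ?A"
      proof (intro CollectI conjI)
        show "subspace ?M'" by simp
        show "V \<subseteq> ?M'" using M span_superset by blast
        show "?M' \<subseteq> Z" using M z Z by (simp add: span_minimal)
        show "U \<inter> ?M' = {0}"
        proof
          show "U \<inter> ?M' \<subseteq> {0}"
          proof
            fix u assume u: "u \<in> U \<inter> ?M'"
            then obtain k where k: "u - k *s z \<in> span M" using span_breakdown_eq by blast
            hence km: "u - k *s z \<in> M" using M(1) span_eq_iff by metis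
            show "u \<in> {0}"
            proof (cases "k = 0")
              case True
              then show ?thesis using km u M by auto
            next
              case False
              have "z = inverse k *s u + (- (inverse k *s (u - k *s z)))"
                using False by (simp add: algebra_simps)
              moreover have "inverse k *s u \<in> U" using u U subspace_scale by blast
              moreover have "- (inverse k *s (u - k *s z)) \<in> M"
                using km M(1) subspace_scale subspace_neg by blast
              ultimately have "z \<in> ssum U M" unfolding ssum_def by blast
              then show ?thesis using z by blast
            qed
          qed
          show "{0} \<subseteq> U \<inter> ?M'" using U subspace_0 span_zero by blast
        qed
      qed
      moreover have "M \<subseteq> ?M'" by (meson span_superset subset_insertI subset_trans)
      ultimately have "?M' = M" using max by blast
      hence "z \<in> M" using span_superset by blast
      hence "z \<in> ssum U M" using ssum_ge2[of U M] U subspace_0 by blast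
      then show False using z by blast
    qed
  qed
  then show ?thesis using M by blast
qed

end


lemma sum_fun_apply: "(\<Sum>x\<in>A. g x) (n::'c) = (\<Sum>x\<in>A. (g x n :: 'b::comm_monoid_add))"
  by (induction A rule: infinite_finite_induct) auto

lemma vs_uscale: "vector_space (uscale :: 'a::field \<Rightarrow> (nat \<Rightarrow> 'a) \<Rightarrow> _)"
  by unfold_locales (auto simp: uscale_def fun_eq_iff algebra_simps)

lemma image_ssum:
  assumes "\<And>x y. f (x + y) = f x + f y"
  shows "f ` ssum A B = ssum (f ` A) (f ` B)"
proof
  show "f ` ssum A B \<subseteq> ssum (f ` A) (f ` B)"
    unfolding ssum_def using assms by blast
  show "ssum (f ` A) (f ` B) \<subseteq> f ` ssum A B"
  proof
    fix z assume "z \<in> ssum (f ` A) (f ` B)"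
    then obtain a b where "a \<in> A" "b \<in> B" "z = f a + f b" unfolding ssum_def by blast
    hence "z = f (a + b)" "a + b \<in> ssum A B" using assms unfolding ssum_def by auto
    thus "z \<in> f ` ssum A B" by blast
  qed
qed

lemma ev_image:
  assumes add: "\<And>x y. f (x + y) = f x + f y" and inj: "inj_on f X0"
    and sub: "\<And>a. ev X0 Xs Ys a \<subseteq> X0"
  shows "ev (f ` X0) (\<lambda>i. f ` Xs i) (\<lambda>i. f ` Ys i) a = f ` ev X0 Xs Ys a"
proof (induction a)
  case (Meet a b)
  then show ?case using inj_on_image_Int[OF inj sub sub] by simp
next
  case (Join a b)
  then show ?case using image_ssum[OF add] by simp
qed auto

lemma rep_transfer:
  fixes s1 :: "'a::field \<Rightarrow> 'v::ab_group_add \<Rightarrow> 'v" and s2 :: "'a \<Rightarrow> 'w::ab_group_add \<Rightarrow> 'w"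
  assumes lin: "Vector_Spaces.linear s1 s2 f" and inj: "inj_on f X0"
    and rep: "is_rep s1 X0 Xs Ys" and ind: "indecomposable s1 X0 Xs Ys"
  shows "is_rep s2 (f ` X0) (\<lambda>i. f ` Xs i) (\<lambda>i. f ` Ys i)
       \<and> indecomposable s2 (f ` X0) (\<lambda>i. f ` Xs i) (\<lambda>i. f ` Ys i)
       \<and> (\<forall>a. ev (f ` X0) (\<lambda>i. f ` Xs i) (\<lambda>i. f ` Ys i) a = f ` ev X0 Xs Ys a)"
proof -
  interpret L: Vector_Spaces.linear s1 s2 f by fact
  have X0: "L.vs1.subspace X0" and fin: "\<exists>B. finite B \<and> B \<subseteq> X0 \<and> L.vs1.span B = X0"
    and gens: "\<And>i. L.vs1.subspace (Xs i) \<and> L.vs1.subspace (Ys i) \<and> Xs i \<subseteq> Ys i \<and> Ys i \<subseteq> X0"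
    using rep unfolding is_rep_def by auto
  have sub: "\<And>a. ev X0 Xs Ys a \<subseteq> X0"
    by (rule L.vs1.ev_le[OF X0]) (use gens in blast)+
  have evsub: "\<And>a. L.vs1.subspace (ev X0 Xs Ys a)"
    by (rule L.vs1.ev_subspace[OF X0]) (use gens in blast)+
  have evim: "\<And>a. ev (f ` X0) (\<lambda>i. f ` Xs i) (\<lambda>i. f ` Ys i) a = f ` ev X0 Xs Ys a"
    by (rule ev_image[OF L.add inj sub])
  have rep2: "is_rep s2 (f ` X0) (\<lambda>i. f ` Xs i) (\<lambda>i. f ` Ys i)"
    unfolding is_rep_def
  proof (intro conjI allI)
    show "L.vs2.subspace (f ` X0)" using L.subspace_image[OF X0] .
    obtain B where B: "finite B" "B \<subseteq> X0" "L.vs1.span B = X0" using fin by blast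
    show "\<exists>B. finite B \<and> B \<subseteq> f ` X0 \<and> L.vs2.span B = f ` X0"
      using B L.span_image[of B] by (intro exI[of _ "f ` B"]) auto
    fix i
    show "L.vs2.subspace (f ` Xs i)" using L.subspace_image gens by blast
    show "L.vs2.subspace (f ` Ys i)" using L.subspace_image gens by blast
    show "f ` Xs i \<subseteq> f ` Ys i" using gens by blast
    show "f ` Ys i \<subseteq> f ` X0" using gens by blast
  qed
  have ind2: "indecomposable s2 (f ` X0) (\<lambda>i. f ` Xs i) (\<lambda>i. f ` Ys i)"
    unfolding indecomposable_def
  proof (intro conjI notI)
    have "X0 \<noteq> {0}" using ind unfolding indecomposable_def by blast
    moreover have "0 \<in> X0" using X0 L.vs1.subspace_0 by blast
    ultimately obtain x where x: "x \<in> X0" "x \<noteq> 0" by blast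
    hence "f x \<noteq> 0" using inj L.zero \<open>0 \<in> X0\<close> unfolding inj_on_def by metis
    thus "f ` X0 = {0} \<Longrightarrow> False" using x by blast
  next
    assume "\<exists>X' X''. L.vs2.subspace X' \<and> L.vs2.subspace X'' \<and>
          X' \<inter> X'' = {0} \<and> ssum X' X'' = f ` X0 \<and> X' \<noteq> {0} \<and> X'' \<noteq> {0} \<and>
          (\<forall>a. ev (f ` X0) (\<lambda>i. f ` Xs i) (\<lambda>i. f ` Ys i) a =
               ssum (ev (f ` X0) (\<lambda>i. f ` Xs i) (\<lambda>i. f ` Ys i) a \<inter> X')
                    (ev (f ` X0) (\<lambda>i. f ` Xs i) (\<lambda>i. f ` Ys i) a \<inter> X''))"
    then obtain P Q where P: "L.vs2.subspace P" and Q: "L.vs2.subspace Q"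
      and PQ: "P \<inter> Q = {0}" and PQX: "ssum P Q = f ` X0" and Pn: "P \<noteq> {0}" and Qn: "Q \<noteq> {0}"
      and spl: "\<And>a. f ` ev X0 Xs Ys a = ssum (f ` ev X0 Xs Ys a \<inter> P) (f ` ev X0 Xs Ys a \<inter> Q)"
      using evim by metis
    define P0 where "P0 = X0 \<inter> f -` P"
    define Q0 where "Q0 = X0 \<inter> f -` Q"
    have P0: "L.vs1.subspace P0" unfolding P0_def
      using L.vs1.subspace_inter[OF X0 L.subspace_vimage[OF P]] .
    have Q0: "L.vs1.subspace Q0" unfolding Q0_def
      using L.vs1.subspace_inter[OF X0 L.subspace_vimage[OF Q]] .
    have z0: "0 \<in> X0" using X0 L.vs1.subspace_0 by blast
    have PQ0: "P0 \<inter> Q0 = {0}"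
    proof
      show "P0 \<inter> Q0 \<subseteq> {0}"
      proof
        fix x assume x: "x \<in> P0 \<inter> Q0"
        hence "f x \<in> P \<inter> Q" "x \<in> X0" unfolding P0_def Q0_def by auto
        hence "f x = f 0" "x \<in> X0" using PQ by auto
        thus "x \<in> {0}" using inj z0 unfolding inj_on_def by blast
      qed
      show "{0} \<subseteq> P0 \<inter> Q0" using P0 Q0 L.vs1.subspace_0 by blast
    qed
    have P0n: "P0 \<noteq> {0}"
    proof
      assume P00: "P0 = {0}"
      have "0 \<in> Q" using Q L.vs2.subspace_0 by blast
      hence "P \<subseteq> f ` X0" using PQX ssum_ge1[of Q P] by blast
      moreover obtain p where "p \<in> P" "p \<noteq> 0" using Pn P L.vs2.subspace_0 by blast
      ultimately obtain x where "x \<in> X0" "f x = p" by blast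
      hence "x \<in> P0" using \<open>p \<in> P\<close> unfolding P0_def by blast
      hence "x = 0" using P00 by blast
      thus False using \<open>f x = p\<close> \<open>p \<noteq> 0\<close> by simp
    qed
    have Q0n: "Q0 \<noteq> {0}"
    proof
      assume Q00: "Q0 = {0}"
      have "0 \<in> P" using P L.vs2.subspace_0 by blast
      hence "Q \<subseteq> f ` X0" using PQX ssum_ge2[of P Q] by blast
      moreover obtain p where "p \<in> Q" "p \<noteq> 0" using Qn Q L.vs2.subspace_0 by blast
      ultimately obtain x where "x \<in> X0" "f x = p" by blast
      hence "x \<in> Q0" using \<open>p \<in> Q\<close> unfolding Q0_def by blast
      hence "x = 0" using Q00 by blast
      thus False using \<open>f x = p\<close> \<open>p \<noteq> 0\<close> by simp
    qed
    have splA: "ev X0 Xs Ys a = ssum (ev X0 Xs Ys a \<inter> P0) (ev X0 Xs Ys a \<inter> Q0)" for a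
    proof
      show "ev X0 Xs Ys a \<subseteq> ssum (ev X0 Xs Ys a \<inter> P0) (ev X0 Xs Ys a \<inter> Q0)"
      proof
        fix x assume x: "x \<in> ev X0 Xs Ys a"
        hence "f x \<in> ssum (f ` ev X0 Xs Ys a \<inter> P) (f ` ev X0 Xs Ys a \<inter> Q)" using spl by blast
        then obtain p q where pq: "p \<in> f ` ev X0 Xs Ys a \<inter> P" "q \<in> f ` ev X0 Xs Ys a \<inter> Q" "f x = p + q"
          unfolding ssum_def by blast
        obtain y where y: "y \<in> ev X0 Xs Ys a" "f y = p" using pq by blast
        obtain z where z: "z \<in> ev X0 Xs Ys a" "f z = q" using pq by blast
        have yz: "y + z \<in> ev X0 Xs Ys a" using y z evsub L.vs1.subspace_add by blast
        have "f (y + z) = f x" using y z pq L.add by simp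
        hence "x = y + z" using inj yz x sub unfolding inj_on_def by blast
        moreover have "y \<in> P0" using y sub pq unfolding P0_def by blast
        moreover have "z \<in> Q0" using z sub pq unfolding Q0_def by blast
        ultimately show "x \<in> ssum (ev X0 Xs Ys a \<inter> P0) (ev X0 Xs Ys a \<inter> Q0)"
          using y z unfolding ssum_def by blast
      qed
      show "ssum (ev X0 Xs Ys a \<inter> P0) (ev X0 Xs Ys a \<inter> Q0) \<subseteq> ev X0 Xs Ys a"
        by (rule L.vs1.ssum_le[OF evsub]) auto
    qed
    have "ssum P0 Q0 = X0"
      using splA[of Top] unfolding P0_def Q0_def by simp
    thus False using ind P0 Q0 PQ0 P0n Q0n splA unfolding indecomposable_def by blast
  qed
  show ?thesis using rep2 ind2 evim by blast
qed


definition ebas :: "nat \<Rightarrow> nat \<Rightarrow> 'a::field" where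
  "ebas k = (\<lambda>n. if n = k then 1 else 0)"

lemma ebas_inj: "inj ebas"
  unfolding inj_def ebas_def fun_eq_iff by (metis one_neq_zero)

lemma perfect_transfer:
  fixes sc :: "'a::field \<Rightarrow> 'w::ab_group_add \<Rightarrow> 'w"
  assumes vs: "vector_space sc" and rep: "is_rep sc X0 Xs Ys" and ind: "indecomposable sc X0 Xs Ys"
    and pf: "perfect TYPE('a) a"
  shows "ev X0 Xs Ys a = {0} \<or> ev X0 Xs Ys a = X0"
proof -
  interpret V1: vector_space sc by fact
  interpret V2: vector_space "uscale :: 'a \<Rightarrow> (nat \<Rightarrow> 'a) \<Rightarrow> _" by (rule vs_uscale)
  interpret VP: vector_space_pair sc "uscale :: 'a \<Rightarrow> (nat \<Rightarrow> 'a) \<Rightarrow> _"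
    unfolding vector_space_pair_def using vs vs_uscale by blast
  have X0: "V1.subspace X0" and fin: "\<exists>B. finite B \<and> B \<subseteq> X0 \<and> V1.span B = X0"
    using rep unfolding is_rep_def by auto
  obtain B where B: "finite B" "B \<subseteq> X0" "V1.span B = X0" using fin by blast
  obtain Bb where Bb: "Bb \<subseteq> X0" "V1.independent Bb" "X0 \<subseteq> V1.span Bb" "card Bb = V1.dim X0"
    using V1.basis_exists by blast
  have fBb: "finite Bb" using V1.independent_span_bound[OF B(1) Bb(2)] Bb(1) B(3) by blast
  define d where "d = card Bb"
  define C where "C = (ebas :: nat \<Rightarrow> nat \<Rightarrow> 'a) ` {..<d}"
  have fC: "finite C" unfolding C_def by simp
  have ij: "inj_on (ebas :: nat \<Rightarrow> nat \<Rightarrow> 'a) {..<d}"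
    using ebas_inj[where 'a='a] by (simp add: inj_on_def inj_def)
  have cC: "card C = d" unfolding C_def using card_image[OF ij] by simp
  have iC: "V2.independent C"
  proof (rule V2.independent_if_scalars_zero[OF fC])
    fix g x assume eq: "(\<Sum>x\<in>C. uscale (g x) x) = 0" and x: "x \<in> C"
    then obtain k where k: "x = ebas k" "k < d" unfolding C_def by blast
    have "(\<Sum>x\<in>C. uscale (g x) x) k = 0" using eq by simp
    hence "(\<Sum>y\<in>C. g y * y k) = 0" by (simp add: sum_fun_apply uscale_def)
    moreover have "(\<Sum>y\<in>C. g y * y k) = (\<Sum>y\<in>C. if y = x then g x else 0)"
    proof (rule sum.cong[OF refl])
      fix y assume "y \<in> C"
      then obtain j where j: "y = ebas j" unfolding C_def by blast
      show "g y * y k = (if y = x then g x else 0)"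
        using ebas_inj k j unfolding inj_def by (auto simp: ebas_def)
    qed
    ultimately show "g x = 0" using x fC by simp
  qed
  define T where "T = V2.span C"
  have dT: "card C = V2.dim T" unfolding T_def
    by (rule V2.basis_card_eq_dim) (use iC V2.span_superset in auto)
  have dimeq: "V1.dim X0 = V2.dim T" using Bb(4) cC dT d_def by simp
  have CT: "C \<subseteq> T" unfolding T_def by (rule V2.span_superset)
  have TC: "T \<subseteq> V2.span C" unfolding T_def by simp
  have TS: "V2.subspace T" unfolding T_def by simp
  obtain f where f: "Vector_Spaces.linear sc uscale f" "f ` Bb = C" "f ` X0 = T" "inj_on f X0"
    using VP.finite_basis_to_basis_subspace_isomorphism[OF X0 TS dimeq fBb Bb(1,2,3,4) fC CT iC TC dT]
    by blast
  have tr: "is_rep uscale (f ` X0) (\<lambda>i. f ` Xs i) (\<lambda>i. f ` Ys i)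
       \<and> indecomposable uscale (f ` X0) (\<lambda>i. f ` Xs i) (\<lambda>i. f ` Ys i)
       \<and> (\<forall>a. ev (f ` X0) (\<lambda>i. f ` Xs i) (\<lambda>i. f ` Ys i) a = f ` ev X0 Xs Ys a)"
    by (rule rep_transfer[OF f(1) f(4) rep ind])
  have "f ` ev X0 Xs Ys a \<in> {{0}, f ` X0}"
    using pf tr unfolding perfect_def by metis
  moreover have gens: "\<And>i. Xs i \<subseteq> X0" "\<And>i. Ys i \<subseteq> X0" using rep unfolding is_rep_def by blast+
  have sub: "ev X0 Xs Ys a \<subseteq> X0" by (rule V1.ev_le[OF X0 gens])
  have z: "0 \<in> ev X0 Xs Ys a"
    using V1.ev_subspace[OF X0] rep V1.subspace_0 unfolding is_rep_def by blast
  interpret L: Vector_Spaces.linear sc uscale f by (rule f(1))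
  have "0 \<in> X0" using X0 V1.subspace_0 by blast
  ultimately show ?thesis
  proof (elim insertE)
    assume h: "f ` ev X0 Xs Ys a = {0}"
    have "ev X0 Xs Ys a \<subseteq> {0}"
    proof
      fix x assume "x \<in> ev X0 Xs Ys a"
      hence "f x = f 0" "x \<in> X0" using h sub by auto
      thus "x \<in> {0}" using f(4) \<open>0 \<in> X0\<close> unfolding inj_on_def by blast
    qed
    thus ?thesis using z by blast
  next
    assume "f ` ev X0 Xs Ys a = f ` X0"
    hence "ev X0 Xs Ys a = X0" using inj_on_image_eq_iff[OF f(4) sub order_refl] by blast
    thus ?thesis by blast
  qed simp
qed


definition s3 :: "('a \<Rightarrow> 'v \<Rightarrow> 'v) \<Rightarrow> 'a \<Rightarrow> 'v \<times> 'v \<times> 'v \<Rightarrow> 'v \<times> 'v \<times> 'v" where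
  "s3 s c t = (s c (fst t), s c (fst (snd t)), s c (snd (snd t)))"

lemma vs_s3:
  fixes s :: "'a::field \<Rightarrow> 'v::ab_group_add \<Rightarrow> 'v"
  assumes "vector_space s" shows "vector_space (s3 s)"
proof -
  interpret vector_space s by fact
  show ?thesis by unfold_locales (auto simp: s3_def prod_eq_iff algebra_simps)
qed

lemma coord_add[simp]: "coord i (x + y) = coord i x + coord i y"
  by (cases i; cases x; cases y) auto
lemma coord_zero[simp]: "coord i 0 = 0"
  by (cases i) (auto simp: zero_prod_def)
lemma coord_uminus[simp]: "coord i (- x) = - coord i x"
  by (cases i; cases x) auto
lemma coord_diff[simp]: "coord i (x - y) = coord i x - coord i y"
  by (cases i; cases x; cases y) auto
lemma coord_s3[simp]: "coord i (s3 s c t) = s c (coord i t)"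
  by (cases i; cases t) (auto simp: s3_def)
lemma coord_triple[simp]: "coord i1 (a, b, c) = a" "coord i2 (a, b, c) = b" "coord i3 (a, b, c) = c"
  by auto
lemma triple_eq: "t = t' \<longleftrightarrow> (\<forall>i. coord i t = coord i t')"
proof
  assume "\<forall>i. coord i t = coord i t'"
  then show "t = t'" by (cases t; cases t') (metis coord.simps)
qed simp
lemma triple_zero: "t = 0 \<longleftrightarrow> (\<forall>i. coord i t = 0)"
  using triple_eq[of t 0] by simp
lemma all_idx: "(\<forall>i. P i) \<longleftrightarrow> P i1 \<and> P i2 \<and> P i3"
  by (metis idx.exhaust)

lemma coord_hom:
  fixes s :: "'a::field \<Rightarrow> 'v::ab_group_add \<Rightarrow> 'v"
  assumes "vector_space s" shows "module_hom (s3 s) s (coord i)"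
  using vs_s3[OF assms] assms unfolding module_hom_iff module_iff_vector_space by simp

lemma X10_sum: "t \<in> X10 Ys \<Longrightarrow> coord i1 t + coord i2 t + coord i3 t = 0"
  unfolding X10_def by simp

lemma coord_X10: "t \<in> X10 Ys \<Longrightarrow> coord i t \<in> Ys i"
  unfolding X10_def Rsp_def by simp

context
  fixes s :: "'a::field \<Rightarrow> 'v::ab_group_add \<Rightarrow> 'v"
  assumes vs: "vector_space s"
begin

interpretation V: vector_space s by (rule vs)
interpretation V3: vector_space "s3 s" by (rule vs_s3[OF vs])

lemma Rsp_sub: "(\<And>i. V.subspace (Ys i)) \<Longrightarrow> V3.subspace (Rsp Ys)"
  unfolding V3.subspace_def Rsp_def
  by (auto intro: V.subspace_0 V.subspace_add V.subspace_scale)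

lemma X10_sub: assumes "\<And>i. V.subspace (Ys i)" shows "V3.subspace (X10 Ys)"
proof -
  have "V3.subspace {t. coord i1 t + coord i2 t + coord i3 t = 0}"
    unfolding V3.subspace_def
  proof (intro conjI ballI allI)
    fix c and x :: "'v \<times> 'v \<times> 'v" assume "x \<in> {t. coord i1 t + coord i2 t + coord i3 t = 0}"
    moreover have "s c (coord i1 x) + s c (coord i2 x) + s c (coord i3 x)
       = s c (coord i1 x + coord i2 x + coord i3 x)" by (simp add: V.scale_right_distrib)
    ultimately show "s3 s c x \<in> {t. coord i1 t + coord i2 t + coord i3 t = 0}" by simp
  qed (auto simp: algebra_simps)
  moreover have "X10 Ys = Rsp Ys \<inter> {t. coord i1 t + coord i2 t + coord i3 t = 0}"
    unfolding X10_def by auto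
  ultimately show ?thesis using V3.subspace_inter Rsp_sub assms by metis
qed

lemma Hp_sub: assumes "\<And>i. V.subspace (Ys i)" shows "V3.subspace (Hp Ys i)"
proof -
  have "Hp Ys i = Rsp Ys \<inter> {t. coord i t = 0}" unfolding Hp_def by auto
  moreover have "V3.subspace {t. coord i t = 0}" unfolding V3.subspace_def by auto
  ultimately show ?thesis using V3.subspace_inter Rsp_sub assms by metis
qed

lemma Gp_sub: assumes "\<And>i. V.subspace (Ys i)" "V.subspace (Xs i)" shows "V3.subspace (Gp Xs Ys i)"
proof -
  have "Gp Xs Ys i = Rsp Ys \<inter> {t. coord i t \<in> Xs i}" unfolding Gp_def by auto
  moreover have "V3.subspace {t. coord i t \<in> Xs i}" unfolding V3.subspace_def
    using assms(2) V.subspace_0 V.subspace_add V.subspace_scale by auto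
  ultimately show ?thesis using V3.subspace_inter Rsp_sub assms by metis
qed

lemma tau_rep:
  assumes rep: "is_rep s X0 Xs Ys"
  shows "is_rep (s3 s) (X10 Ys) (\<lambda>i. Hp Ys i \<inter> X10 Ys) (\<lambda>i. Gp Xs Ys i \<inter> X10 Ys)"
proof -
  have X0: "V.subspace X0" and fin: "\<exists>B. finite B \<and> B \<subseteq> X0 \<and> V.span B = X0"
    and gens: "\<And>i. V.subspace (Xs i) \<and> V.subspace (Ys i) \<and> Xs i \<subseteq> Ys i \<and> Ys i \<subseteq> X0"
    using rep unfolding is_rep_def by auto
  obtain B where B: "finite B" "B \<subseteq> X0" "V.span B = X0" using fin by blast
  have W: "V3.subspace (X10 Ys)" using X10_sub gens by blast
  define l1 where "l1 = (\<lambda>x::'v. (x, 0::'v, 0::'v))"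
  define l2 where "l2 = (\<lambda>x::'v. (0::'v, x, 0::'v))"
  define l3 where "l3 = (\<lambda>x::'v. (0::'v, 0::'v, x))"
  have h1: "module_hom s (s3 s) l1" and h2: "module_hom s (s3 s) l2" and h3: "module_hom s (s3 s) l3"
    using vs vs_s3[OF vs] unfolding module_hom_iff module_iff_vector_space l1_def l2_def l3_def
    by (auto simp: s3_def)
  define F where "F = l1 ` B \<union> l2 ` B \<union> l3 ` B"
  have fF: "finite F" unfolding F_def using B by simp
  have WF: "X10 Ys \<subseteq> V3.span F"
  proof
    fix t assume t: "t \<in> X10 Ys"
    have c: "coord i t \<in> V.span B" for i using coord_X10[OF t] gens B by blast
    have "l1 (coord i1 t) \<in> V3.span F"
      using module_hom.span_image[OF h1, of B] c[of i1] V3.span_mono[of "l1 ` B" F] unfolding F_def by blast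
    moreover have "l2 (coord i2 t) \<in> V3.span F"
      using module_hom.span_image[OF h2, of B] c[of i2] V3.span_mono[of "l2 ` B" F] unfolding F_def by blast
    moreover have "l3 (coord i3 t) \<in> V3.span F"
      using module_hom.span_image[OF h3, of B] c[of i3] V3.span_mono[of "l3 ` B" F] unfolding F_def by blast
    moreover have "t = l1 (coord i1 t) + l2 (coord i2 t) + l3 (coord i3 t)"
      by (cases t) (simp add: l1_def l2_def l3_def)
    ultimately show "t \<in> V3.span F" using V3.span_add by metis
  qed
  obtain Bw where Bw: "Bw \<subseteq> X10 Ys" "V3.independent Bw" "X10 Ys \<subseteq> V3.span Bw"
    by (rule V3.maximal_independent_subset)
  have "finite Bw" using V3.independent_span_bound[OF fF Bw(2)] Bw(1) WF by blast
  moreover have "V3.span Bw = X10 Ys" using V3.span_subspace[OF Bw(1) Bw(3) W] .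
  ultimately have finW: "\<exists>B. finite B \<and> B \<subseteq> X10 Ys \<and> V3.span B = X10 Ys" using Bw(1) by blast
  show ?thesis unfolding is_rep_def
  proof (intro conjI allI finW W)
    fix i
    show "V3.subspace (Hp Ys i \<inter> X10 Ys)" using V3.subspace_inter Hp_sub W gens by blast
    show "V3.subspace (Gp Xs Ys i \<inter> X10 Ys)" using V3.subspace_inter Gp_sub W gens by blast
    show "Hp Ys i \<inter> X10 Ys \<subseteq> Gp Xs Ys i \<inter> X10 Ys"
      unfolding Hp_def Gp_def using gens V.subspace_0 by auto
    show "Gp Xs Ys i \<inter> X10 Ys \<subseteq> X10 Ys" by blast
  qed
qed

end


lemma in3:
  assumes "\<And>j. (0::'b::monoid_add) \<in> F j"
  shows "F i \<subseteq> ssum (F i1) (ssum (F i2) (F i3))"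
proof -
  have z: "0 \<in> ssum (F i2) (F i3)" using assms[of i2] assms[of i3] unfolding ssum_def by force
  have a: "F i1 \<subseteq> ssum (F i1) (ssum (F i2) (F i3))" using ssum_ge1[OF z] .
  have b: "ssum (F i2) (F i3) \<subseteq> ssum (F i1) (ssum (F i2) (F i3))" using ssum_ge2[OF assms[of i1]] .
  show ?thesis
  proof (cases i)
    case i1 then show ?thesis using a by simp
  next
    case i2 then show ?thesis using b ssum_ge1[OF assms[of i3], of "F i2"] by blast
  next
    case i3 then show ?thesis using b ssum_ge2[OF assms[of i2], of "F i3"] by blast
  qed
qed

context
  fixes s :: "'a::field \<Rightarrow> 'v::ab_group_add \<Rightarrow> 'v"
  assumes vs: "vector_space s"
begin

interpretation V: vector_space s by (rule vs)
interpretation V3: vector_space "s3 s" by (rule vs_s3[OF vs])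

lemma tau_indec:
  assumes rep: "is_rep s X0 Xs Ys" and ind: "indecomposable s X0 Xs Ys" and Wn: "X10 Ys \<noteq> {0}"
  shows "indecomposable (s3 s) (X10 Ys) (\<lambda>i. Hp Ys i \<inter> X10 Ys) (\<lambda>i. Gp Xs Ys i \<inter> X10 Ys)"
  unfolding indecomposable_def
proof (intro conjI notI Wn)
  define W where "W = X10 Ys"
  have X0: "V.subspace X0"
    and gens: "\<And>i. V.subspace (Xs i) \<and> V.subspace (Ys i) \<and> Xs i \<subseteq> Ys i \<and> Ys i \<subseteq> X0"
    using rep unfolding is_rep_def by auto
  have Xsub: "\<And>i. V.subspace (Xs i)" and Ysub: "\<And>i. V.subspace (Ys i)"
    and XY: "\<And>i. Xs i \<subseteq> Ys i" and YX0: "\<And>i. Ys i \<subseteq> X0" using gens by auto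
  have WS: "V3.subspace W" unfolding W_def using X10_sub[OF vs] Ysub by blast
  have hom: "\<And>i. module_hom (s3 s) s (coord i)" using coord_hom[OF vs] .
  assume "\<exists>X' X''. V3.subspace X' \<and> V3.subspace X'' \<and> X' \<inter> X'' = {0} \<and>
     ssum X' X'' = X10 Ys \<and> X' \<noteq> {0} \<and> X'' \<noteq> {0} \<and>
     (\<forall>a. ev (X10 Ys) (\<lambda>i. Hp Ys i \<inter> X10 Ys) (\<lambda>i. Gp Xs Ys i \<inter> X10 Ys) a =
          ssum (ev (X10 Ys) (\<lambda>i. Hp Ys i \<inter> X10 Ys) (\<lambda>i. Gp Xs Ys i \<inter> X10 Ys) a \<inter> X')
           (ev (X10 Ys) (\<lambda>i. Hp Ys i \<inter> X10 Ys) (\<lambda>i. Gp Xs Ys i \<inter> X10 Ys) a \<inter> X''))"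
  then obtain A B where A: "V3.subspace A" and B: "V3.subspace B" and AB: "A \<inter> B = {0}"
    and ABW: "ssum A B = W" and An: "A \<noteq> {0}" and Bn: "B \<noteq> {0}"
    and spl: "\<And>a. ev W (\<lambda>i. Hp Ys i \<inter> W) (\<lambda>i. Gp Xs Ys i \<inter> W) a =
          ssum (ev W (\<lambda>i. Hp Ys i \<inter> W) (\<lambda>i. Gp Xs Ys i \<inter> W) a \<inter> A)
           (ev W (\<lambda>i. Hp Ys i \<inter> W) (\<lambda>i. Gp Xs Ys i \<inter> W) a \<inter> B)"
    unfolding W_def by blast
  have splH: "\<And>i. Hp Ys i \<inter> W = ssum (Hp Ys i \<inter> W \<inter> A) (Hp Ys i \<inter> W \<inter> B)"
    using spl[of "Xg _"] by simp
  have splG: "\<And>i. Gp Xs Ys i \<inter> W = ssum (Gp Xs Ys i \<inter> W \<inter> A) (Gp Xs Ys i \<inter> W \<inter> B)"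
    using spl[of "Yg _"] by simp
  have A0': "0 \<in> A" and B0': "0 \<in> B" using A B V3.subspace_0 by blast+
  have AW: "A \<subseteq> W" using ssum_ge1[OF B0', of A] ABW by simp
  have BW: "B \<subseteq> W" using ssum_ge2[OF A0', of B] ABW by simp
  define PA where "PA i = coord i ` A" for i
  define PB where "PB i = coord i ` B" for i
  define PW where "PW i = coord i ` W" for i
  have PAs: "V.subspace (PA i)" for i unfolding PA_def using module_hom.subspace_image[OF hom A] .
  have PBs: "V.subspace (PB i)" for i unfolding PB_def using module_hom.subspace_image[OF hom B] .
  have PWs: "V.subspace (PW i)" for i unfolding PW_def using module_hom.subspace_image[OF hom WS] .
  have PWY: "PW i \<subseteq> Ys i" for i unfolding PW_def W_def using coord_X10 by blast
  have PAW: "PA i \<subseteq> PW i" for i unfolding PA_def PW_def using AW by blast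
  have PBW: "PB i \<subseteq> PW i" for i unfolding PB_def PW_def using BW by blast
  have z: "0 \<in> PA i" "0 \<in> PB i" "0 \<in> PW i" for i using PAs PBs PWs V.subspace_0 by blast+
  have inW: "t \<in> W" if "\<And>i. coord i t \<in> Ys i" "coord i1 t + coord i2 t + coord i3 t = 0" for t
    using that unfolding W_def X10_def Rsp_def by simp
  have K1: "PA i \<inter> PB i = {0}" for i
  proof
    show "PA i \<inter> PB i \<subseteq> {0}"
    proof
      fix x assume "x \<in> PA i \<inter> PB i"
      then obtain a b where ab: "a \<in> A" "b \<in> B" "x = coord i a" "x = coord i b"
        unfolding PA_def PB_def by blast
      have "a - b \<in> W" using ab AW BW WS V3.subspace_diff by blast
      moreover have "coord i (a - b) = 0" using ab by simp
      ultimately have "a - b \<in> Hp Ys i \<inter> W" unfolding Hp_def W_def X10_def by simp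
      then obtain h1 h2 where h: "h1 \<in> Hp Ys i \<inter> W \<inter> A" "h2 \<in> Hp Ys i \<inter> W \<inter> B" "a - b = h1 + h2"
        using splH[of i] unfolding ssum_def by blast
      have "a - h1 = b + h2" using h(3) by (simp add: algebra_simps)
      moreover have "a - h1 \<in> A" using ab h A V3.subspace_diff by blast
      moreover have "b + h2 \<in> B" using ab h B V3.subspace_add by blast
      ultimately have "a - h1 = 0" using AB by (metis IntI singletonD)
      hence "a = h1" by simp
      hence "x = coord i h1" using ab by simp
      also have "\<dots> = 0" using h(1) unfolding Hp_def by simp
      finally show "x \<in> {0}" by simp
    qed
    show "{0} \<subseteq> PA i \<inter> PB i" using z by blast
  qed
  have KX: "Xs i \<inter> PW i \<subseteq> ssum (Xs i \<inter> PA i) (Xs i \<inter> PB i)" for i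
  proof
    fix x assume "x \<in> Xs i \<inter> PW i"
    then obtain w where w: "w \<in> W" "x = coord i w" "x \<in> Xs i" unfolding PW_def by blast
    hence "w \<in> Gp Xs Ys i \<inter> W" unfolding Gp_def W_def X10_def by simp
    then obtain g1 g2 where g: "g1 \<in> Gp Xs Ys i \<inter> W \<inter> A" "g2 \<in> Gp Xs Ys i \<inter> W \<inter> B" "w = g1 + g2"
      using splG[of i] unfolding ssum_def by blast
    have "coord i g1 \<in> Xs i \<inter> PA i" using g(1) unfolding Gp_def PA_def by auto
    moreover have "coord i g2 \<in> Xs i \<inter> PB i" using g(2) unfolding Gp_def PB_def by auto
    moreover have "x = coord i g1 + coord i g2" using w g by simp
    ultimately show "x \<in> ssum (Xs i \<inter> PA i) (Xs i \<inter> PB i)" unfolding ssum_def by blast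
  qed
  have KP: "PW i \<subseteq> ssum (PA i) (PB i)" for i
  proof
    fix x assume "x \<in> PW i"
    then obtain w where w: "w \<in> W" "x = coord i w" unfolding PW_def by blast
    then obtain a b where "a \<in> A" "b \<in> B" "w = a + b" using ABW unfolding ssum_def by blast
    thus "x \<in> ssum (PA i) (PB i)" using w unfolding PA_def PB_def ssum_def by auto
  qed
  have keyL: "coord i a = \<alpha>" if "\<alpha> \<in> PA i" "\<beta> \<in> PB i" "a \<in> A" "b \<in> B"
      "coord i a + coord i b = \<alpha> - \<beta>" for i a b \<alpha> \<beta>
  proof -
    have e: "coord i a - \<alpha> = - \<beta> - coord i b" using that(5) by (simp add: algebra_simps)
    have "coord i a \<in> PA i" using that(3) unfolding PA_def by blast
    hence "coord i a - \<alpha> \<in> PA i" using that(1) PAs V.subspace_diff by blast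
    moreover have "coord i b \<in> PB i" using that(4) unfolding PB_def by blast
    hence "- \<beta> - coord i b \<in> PB i" using that(2) PBs V.subspace_diff V.subspace_neg by blast
    ultimately have "coord i a - \<alpha> = 0" using e K1[of i] by (metis IntI singletonD)
    thus ?thesis by simp
  qed
  define A0 where "A0 = ssum (PA i1) (ssum (PA i2) (PA i3))"
  define B0 where "B0 = ssum (PB i1) (ssum (PB i2) (PB i3))"
  have A0s: "V.subspace A0" unfolding A0_def using PAs V.ssum_subspace by blast
  have B0s: "V.subspace B0" unfolding B0_def using PBs V.ssum_subspace by blast
  have PAA0: "PA i \<subseteq> A0" for i unfolding A0_def by (rule in3) (use z in blast)
  have PBB0: "PB i \<subseteq> B0" for i unfolding B0_def by (rule in3) (use z in blast)
  have K2: "A0 \<inter> B0 = {0}"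
  proof
    show "A0 \<inter> B0 \<subseteq> {0}"
    proof
      fix x assume "x \<in> A0 \<inter> B0"
      then obtain a1 a2 a3 b1 b2 b3 where
        ab: "a1 \<in> PA i1" "a2 \<in> PA i2" "a3 \<in> PA i3" "b1 \<in> PB i1" "b2 \<in> PB i2" "b3 \<in> PB i3"
        "x = a1 + (a2 + a3)" "x = b1 + (b2 + b3)"
        unfolding A0_def B0_def ssum_def by blast
      define \<omega> where "\<omega> = (a1 - b1, a2 - b2, a3 - b3)"
      have "coord i \<omega> \<in> Ys i" for i
        using ab PAW PBW PWY Ysub[of i] V.subspace_diff unfolding \<omega>_def by (cases i) (simp; blast)+
      moreover have "coord i1 \<omega> + coord i2 \<omega> + coord i3 \<omega> = 0"
      proof -
        have "coord i1 \<omega> + coord i2 \<omega> + coord i3 \<omega> = (a1 + (a2 + a3)) - (b1 + (b2 + b3))"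
          unfolding \<omega>_def by (simp add: algebra_simps)
        thus ?thesis using ab by simp
      qed
      ultimately have "\<omega> \<in> W" using inW by blast
      then obtain a b where ab2: "a \<in> A" "b \<in> B" "\<omega> = a + b" using ABW unfolding ssum_def by blast
      have co: "coord i a + coord i b = coord i \<omega>" for i using ab2(3) by simp
      have "coord i1 a = a1" by (rule keyL[OF ab(1) ab(4) ab2(1,2)]) (use co[of i1] \<omega>_def in simp)
      moreover have "coord i2 a = a2" by (rule keyL[OF ab(2) ab(5) ab2(1,2)]) (use co[of i2] \<omega>_def in simp)
      moreover have "coord i3 a = a3" by (rule keyL[OF ab(3) ab(6) ab2(1,2)]) (use co[of i3] \<omega>_def in simp)
      moreover have "coord i1 a + coord i2 a + coord i3 a = 0"
        using ab2(1) AW unfolding W_def by (blast intro: X10_sum)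
      ultimately have "x = 0" using ab(7) by (simp add: add.assoc)
      thus "x \<in> {0}" by simp
    qed
    show "{0} \<subseteq> A0 \<inter> B0" using A0s B0s V.subspace_0 by blast
  qed
  have "\<forall>i. \<exists>C. V.subspace C \<and> C \<subseteq> Ys i \<and> PW i \<inter> C = {0} \<and> ssum (PW i) C = Ys i
            \<and> Xs i \<subseteq> ssum (Xs i \<inter> PW i) (Xs i \<inter> C)"
  proof
    fix i
    have U: "V.subspace (Xs i \<inter> PW i)" using Xsub PWs V.subspace_inter by blast
    obtain D where D: "V.subspace D" "{0} \<subseteq> D" "D \<subseteq> Xs i" "(Xs i \<inter> PW i) \<inter> D = {0}"
      "ssum (Xs i \<inter> PW i) D = Xs i"
    proof -
      have p1: "Xs i \<inter> PW i \<subseteq> Xs i" by blast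
      have p2: "{0} \<subseteq> Xs i" using Xsub V.subspace_0 by blast
      have p3: "(Xs i \<inter> PW i) \<inter> {0} = {0}" using U V.subspace_0 by blast
      show ?thesis using V.complement_exists[OF U V.subspace_single_0 Xsub[of i] p1 p2 p3] that by blast
    qed
    have "PW i \<inter> D = {0}" using D(3,4) D(1) V.subspace_0 by blast
    then obtain C where C: "V.subspace C" "D \<subseteq> C" "C \<subseteq> Ys i" "PW i \<inter> C = {0}" "ssum (PW i) C = Ys i"
    proof -
      have "D \<subseteq> Ys i" using D(3) XY[of i] by blast
      from V.complement_exists[OF PWs D(1) Ysub[of i] PWY this \<open>PW i \<inter> D = {0}\<close>]
      show ?thesis using that by blast
    qed
    have "Xs i \<subseteq> ssum (Xs i \<inter> PW i) (Xs i \<inter> C)"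
      using D(5) V.ssum_mono[of "Xs i \<inter> PW i" "Xs i \<inter> PW i" D "Xs i \<inter> C"] C(2) D(3) by blast
    thus "\<exists>C. V.subspace C \<and> C \<subseteq> Ys i \<and> PW i \<inter> C = {0} \<and> ssum (PW i) C = Ys i
            \<and> Xs i \<subseteq> ssum (Xs i \<inter> PW i) (Xs i \<inter> C)" using C by blast
  qed
  then obtain C where C: "\<And>i. V.subspace (C i)" "\<And>i. C i \<subseteq> Ys i" "\<And>i. PW i \<inter> C i = {0}"
    "\<And>i. ssum (PW i) (C i) = Ys i" "\<And>i. Xs i \<subseteq> ssum (Xs i \<inter> PW i) (Xs i \<inter> C i)"
    by metis
  have zC: "0 \<in> C i" for i using C(1) V.subspace_0 by blast
  have cz: "c = 0" if "p \<in> PW i" "c \<in> C i" "p + c \<in> PW i" for i p c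
  proof -
    have "c = (p + c) - p" by simp
    hence "c \<in> PW i" using that PWs V.subspace_diff by metis
    thus ?thesis using that(2) C(3)[of i] by blast
  qed
  have L: "c1 = 0 \<and> c2 = 0 \<and> c3 = 0"
    if h: "q \<in> ssum (PW i1) (ssum (PW i2) (PW i3))" "c1 \<in> C i1" "c2 \<in> C i2" "c3 \<in> C i3"
       "q + (c1 + (c2 + c3)) = 0" for q c1 c2 c3
  proof -
    obtain p1 p2 p3 where p: "p1 \<in> PW i1" "p2 \<in> PW i2" "p3 \<in> PW i3" "q = p1 + (p2 + p3)"
      using h(1) unfolding ssum_def by blast
    define \<omega> where "\<omega> = (p1 + c1, p2 + c2, p3 + c3)"
    have "coord i \<omega> \<in> Ys i" for i
      using p h C(2) PWY Ysub[of i] V.subspace_add unfolding \<omega>_def by (cases i) (simp; blast)+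
    moreover have "coord i1 \<omega> + coord i2 \<omega> + coord i3 \<omega> = 0"
    proof -
      have "coord i1 \<omega> + coord i2 \<omega> + coord i3 \<omega> = q + (c1 + (c2 + c3))"
        unfolding \<omega>_def p(4) by (simp add: algebra_simps)
      thus ?thesis using h(5) by simp
    qed
    ultimately have "\<omega> \<in> W" using inW by blast
    hence "coord i \<omega> \<in> PW i" for i unfolding PW_def by blast
    hence "p1 + c1 \<in> PW i1" "p2 + c2 \<in> PW i2" "p3 + c3 \<in> PW i3" unfolding \<omega>_def
      using coord_triple by metis+
    thus ?thesis using cz p h by blast
  qed
  define V where "V = ssum B0 (ssum (C i1) (ssum (C i2) (C i3)))"
  have Vs: "V.subspace V" unfolding V_def using B0s C(1) V.ssum_subspace by blast
  have CV: "C i \<subseteq> V" for i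
  proof -
    have "C i \<subseteq> ssum (C i1) (ssum (C i2) (C i3))" by (rule in3) (use zC in blast)
    moreover have "0 \<in> B0" using B0s V.subspace_0 by blast
    ultimately show ?thesis unfolding V_def using ssum_ge2 by blast
  qed
  have B0V: "B0 \<subseteq> V" unfolding V_def
    by (rule ssum_ge1) (use V.ssum_subspace C(1) V.subspace_0 in blast)
  have A0X: "A0 \<subseteq> X0" unfolding A0_def
    using PAW PWY YX0 by (intro V.ssum_le[OF X0]; blast)
  have VX: "V \<subseteq> X0" unfolding V_def B0_def
    using PBW PWY YX0 C(2) by (intro V.ssum_le[OF X0]; blast)
  have A0V: "A0 \<inter> V = {0}"
  proof
    show "A0 \<inter> V \<subseteq> {0}"
    proof
      fix x assume "x \<in> A0 \<inter> V"
      then obtain a1 a2 a3 b c1 c2 c3 where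
        ab: "a1 \<in> PA i1" "a2 \<in> PA i2" "a3 \<in> PA i3" "b \<in> B0" "c1 \<in> C i1" "c2 \<in> C i2" "c3 \<in> C i3"
        "x = a1 + (a2 + a3)" "x = b + (c1 + (c2 + c3))"
        unfolding A0_def V_def ssum_def by blast
      obtain b1 b2 b3 where bb: "b1 \<in> PB i1" "b2 \<in> PB i2" "b3 \<in> PB i3" "b = b1 + (b2 + b3)"
        using ab(4) unfolding B0_def ssum_def by blast
      have d: "a - b' \<in> PW i" if "a \<in> PA i" "b' \<in> PB i" for i a b'
        using that PAW PBW PWs V.subspace_diff by blast
      have "(a1 - b1) + ((a2 - b2) + (a3 - b3)) \<in> ssum (PW i1) (ssum (PW i2) (PW i3))"
        unfolding ssum_def using d ab bb by blast
      moreover have "(a1 - b1) + ((a2 - b2) + (a3 - b3)) + ((- c1) + ((- c2) + (- c3))) = 0"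
      proof -
        have "(a1 - b1) + ((a2 - b2) + (a3 - b3)) + ((- c1) + ((- c2) + (- c3)))
            = (a1 + (a2 + a3)) - (b + (c1 + (c2 + c3)))" unfolding bb(4) by (simp add: algebra_simps)
        moreover have "(a1 + (a2 + a3)) - (b + (c1 + (c2 + c3))) = 0"
          using ab(8,9) by (metis right_minus_eq)
        ultimately show ?thesis by simp
      qed
      moreover have "- c1 \<in> C i1" "- c2 \<in> C i2" "- c3 \<in> C i3"
        using ab C(1) V.subspace_neg by blast+
      ultimately have "- c1 = 0 \<and> - c2 = 0 \<and> - c3 = 0" using L by blast
      hence "x = b" using ab(9) by simp
      hence "x \<in> A0 \<inter> B0" using \<open>x \<in> A0 \<inter> V\<close> ab(4) by blast
      thus "x \<in> {0}" using K2 by blast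
    qed
    show "{0} \<subseteq> A0 \<inter> V" using A0s Vs V.subspace_0 by blast
  qed
  obtain X'' where X'': "V.subspace X''" "V \<subseteq> X''" "X'' \<subseteq> X0" "A0 \<inter> X'' = {0}" "ssum A0 X'' = X0"
    using V.complement_exists[OF A0s Vs X0 A0X VX A0V] by blast
  have A0n: "A0 \<noteq> {0}"
  proof
    assume A00: "A0 = {0}"
    obtain a where a: "a \<in> A" "a \<noteq> 0" using An A0' by blast
    then obtain i where "coord i a \<noteq> 0" using triple_zero by blast
    moreover have "coord i a \<in> A0" using a PAA0 unfolding PA_def by blast
    ultimately show False using A00 by blast
  qed
  have X''n: "X'' \<noteq> {0}"
  proof
    assume X00: "X'' = {0}"
    obtain b where b: "b \<in> B" "b \<noteq> 0" using Bn B0' by blast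
    then obtain i where "coord i b \<noteq> 0" using triple_zero by blast
    moreover have "coord i b \<in> X''" using b PBB0 B0V X''(2) unfolding PB_def by blast
    ultimately show False using X00 by blast
  qed
  have sX0: "spl A0 X'' X0" unfolding spl_def using X''(5) A0X X''(3)
    by (metis inf.absorb_iff2 inf_commute)
  have sY: "spl A0 X'' (Ys i)" for i
    unfolding spl_def
  proof
    show "Ys i \<subseteq> ssum (Ys i \<inter> A0) (Ys i \<inter> X'')"
    proof
      fix y assume "y \<in> Ys i"
      then obtain p c where pc: "p \<in> PW i" "c \<in> C i" "y = p + c" using C(4)[of i] unfolding ssum_def by blast
      then obtain a' b' where ab: "a' \<in> PA i" "b' \<in> PB i" "p = a' + b'" using KP unfolding ssum_def by blast
      have "a' \<in> Ys i \<inter> A0" using ab PAA0 PAW PWY by blast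
      moreover have "b' + c \<in> X''"
      proof -
        have "b' \<in> X''" "c \<in> X''" using ab(2) pc(2) PBB0 B0V CV X''(2) by blast+
        thus ?thesis by (rule V.subspace_add[OF X''(1)])
      qed
      moreover have "b' + c \<in> Ys i"
      proof -
        have "b' \<in> Ys i" "c \<in> Ys i" using ab(2) pc(2) PBW PWY C(2) by blast+
        thus ?thesis by (rule V.subspace_add[OF Ysub])
      qed
      moreover have "y = a' + (b' + c)" using pc ab by (simp add: add.assoc)
      ultimately show "y \<in> ssum (Ys i \<inter> A0) (Ys i \<inter> X'')" unfolding ssum_def by blast
    qed
    show "ssum (Ys i \<inter> A0) (Ys i \<inter> X'') \<subseteq> Ys i" by (rule V.ssum_le[OF Ysub]) auto
  qed
  have sX: "spl A0 X'' (Xs i)" for i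
    unfolding spl_def
  proof
    show "Xs i \<subseteq> ssum (Xs i \<inter> A0) (Xs i \<inter> X'')"
    proof
      fix x assume "x \<in> Xs i"
      then obtain p c where pc: "p \<in> Xs i \<inter> PW i" "c \<in> Xs i \<inter> C i" "x = p + c"
        using C(5)[of i] unfolding ssum_def by blast
      then obtain a' b' where ab: "a' \<in> Xs i \<inter> PA i" "b' \<in> Xs i \<inter> PB i" "p = a' + b'"
        using KX unfolding ssum_def by blast
      have "a' \<in> Xs i \<inter> A0" using ab PAA0 by blast
      moreover have "b' + c \<in> X''"
      proof -
        have "b' \<in> X''" "c \<in> X''" using ab(2) pc(2) PBB0 B0V CV X''(2) by blast+
        thus ?thesis by (rule V.subspace_add[OF X''(1)])
      qed
      moreover have "b' + c \<in> Xs i"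
      proof -
        have "b' \<in> Xs i" "c \<in> Xs i" using ab(2) pc(2) by blast+
        thus ?thesis by (rule V.subspace_add[OF Xsub])
      qed
      moreover have "x = a' + (b' + c)" using pc ab by (simp add: add.assoc)
      ultimately show "x \<in> ssum (Xs i \<inter> A0) (Xs i \<inter> X'')" unfolding ssum_def by blast
    qed
    show "ssum (Xs i \<inter> A0) (Xs i \<inter> X'') \<subseteq> Xs i" by (rule V.ssum_le[OF Xsub]) auto
  qed
  have all: "ev X0 Xs Ys a = ssum (ev X0 Xs Ys a \<inter> A0) (ev X0 Xs Ys a \<inter> X'')" for a
    using V.spl_ev[OF A0s X''(1) X''(4) X0 Xsub Ysub sX0 sX sY] unfolding spl_def .
  have "\<exists>X' X''. V.subspace X' \<and> V.subspace X'' \<and> X' \<inter> X'' = {0} \<and> ssum X' X'' = X0 \<and>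
      X' \<noteq> {0} \<and> X'' \<noteq> {0} \<and> (\<forall>a. ev X0 Xs Ys a = ssum (ev X0 Xs Ys a \<inter> X') (ev X0 Xs Ys a \<inter> X''))"
    using A0s X'' A0n X''n all by blast
  thus False using ind unfolding indecomposable_def by blast
qed (use Wn in simp)

end


definition SS :: "('w::monoid_add \<times> 'w \<times> 'w) set \<Rightarrow> 'w set" where
  "SS T = ssum (ssum (coord i1 ` T) (coord i2 ` T)) (coord i3 ` T)"

lemma Sset_SS: "Sset Xs Ys a = SS (PhiPlus_ev Xs Ys a)"
  unfolding Sset_def SS_def ..

lemma SS_mono: "T \<subseteq> T' \<Longrightarrow> SS T \<subseteq> SS T'"
  unfolding SS_def ssum_def by blast

lemma SS_zero: "SS {0} = {0}"
  unfolding SS_def ssum_def by (auto simp: zero_prod_def)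

lemma SS_has_zero: "0 \<in> T \<Longrightarrow> (0::'w::monoid_add) \<in> SS T"
  unfolding SS_def ssum_def by (force simp: zero_prod_def)

theorem mainTheorem17:
  fixes s :: "'a::field \<Rightarrow> 'v::ab_group_add \<Rightarrow> 'v"
    and X0 :: "'v set" and Xs Ys :: "idx \<Rightarrow> 'v set"
  assumes "vector_space s"
    and "is_rep s X0 Xs Ys"
    and "indecomposable s X0 Xs Ys"
  shows "(\<forall>v1 v2 v3. perfect TYPE('a) v1 \<and> perfect TYPE('a) v2 \<and> perfect TYPE('a) v3 \<longrightarrow>
            Sset Xs Ys (Meet (Meet v1 v2) v3) = Sset Xs Ys v1 \<inter> Sset Xs Ys v2 \<inter> Sset Xs Ys v3)
       \<and> (\<forall>v u. perfect TYPE('a) v \<longrightarrow>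
            Sset Xs Ys (Meet v u) = Sset Xs Ys v \<inter> Sset Xs Ys u)"
proof -
  note vs = assms(1) and rep = assms(2) and ind = assms(3)
  interpret V3: vector_space "s3 s" by (rule vs_s3[OF vs])
  define W where "W = X10 Ys"
  define PV where "PV a = PhiPlus_ev Xs Ys a" for a
  have trep: "is_rep (s3 s) W (\<lambda>i. Hp Ys i \<inter> W) (\<lambda>i. Gp Xs Ys i \<inter> W)"
    unfolding W_def using tau_rep[OF vs rep] .
  have WS: "V3.subspace W" and tg: "\<And>i. V3.subspace (Hp Ys i \<inter> W) \<and> V3.subspace (Gp Xs Ys i \<inter> W)
      \<and> Hp Ys i \<inter> W \<subseteq> Gp Xs Ys i \<inter> W \<and> Gp Xs Ys i \<inter> W \<subseteq> W"
    using trep unfolding is_rep_def by blast+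
  have PVdef: "PV a = ev W (\<lambda>i. Hp Ys i \<inter> W) (\<lambda>i. Gp Xs Ys i \<inter> W) a" for a
    unfolding PV_def PhiPlus_ev_def W_def ..
  have PVsub: "PV a \<subseteq> W" for a
    unfolding PVdef by (rule V3.ev_le[OF WS]) (use tg in blast)+
  have PVz: "0 \<in> PV a" for a
  proof -
    have "V3.subspace (ev W (\<lambda>i. Hp Ys i \<inter> W) (\<lambda>i. Gp Xs Ys i \<inter> W) a)"
      by (rule V3.ev_subspace[OF WS]) (use tg in blast)+
    thus ?thesis unfolding PVdef by (rule V3.subspace_0)
  qed
  have PVmeet: "PV (Meet a b) = PV a \<inter> PV b" for a b unfolding PVdef by simp
  have S: "Sset Xs Ys a = SS (PV a)" for a unfolding PV_def by (rule Sset_SS)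
  have perf: "PV v = {0} \<or> PV v = W" if "perfect TYPE('a) v" for v
  proof (cases "W = {0}")
    case True
    then show ?thesis using PVsub[of v] PVz[of v] by blast
  next
    case False
    have "indecomposable (s3 s) W (\<lambda>i. Hp Ys i \<inter> W) (\<lambda>i. Gp Xs Ys i \<inter> W)"
      unfolding W_def by (rule tau_indec[OF vs rep ind False[unfolded W_def]])
    from perfect_transfer[OF vs_s3[OF vs] trep this that] show ?thesis unfolding PVdef .
  qed
  have SZ: "0 \<in> Sset Xs Ys a" for a unfolding S by (rule SS_has_zero[OF PVz])
  have part2: "Sset Xs Ys (Meet v u) = Sset Xs Ys v \<inter> Sset Xs Ys u" if "perfect TYPE('a) v" for v u
  proof (cases "PV v = {0}")
    case True
    hence "PV (Meet v u) = {0}" using PVmeet PVz by blast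
    thus ?thesis using True SZ[of u] unfolding S SS_zero by (simp add: SS_zero)
  next
    case False
    hence W: "PV v = W" using perf[OF that] by blast
    hence "PV (Meet v u) = PV u" using PVmeet PVsub by blast
    moreover have "SS (PV u) \<subseteq> SS (PV v)" using W PVsub SS_mono by metis
    ultimately show ?thesis unfolding S by (simp add: Int_absorb1)
  qed
  have part1: "Sset Xs Ys (Meet (Meet v1 v2) v3) = Sset Xs Ys v1 \<inter> Sset Xs Ys v2 \<inter> Sset Xs Ys v3"
    if "perfect TYPE('a) v1" "perfect TYPE('a) v2" "perfect TYPE('a) v3" for v1 v2 v3
  proof -
    have "Sset Xs Ys (Meet (Meet v1 v2) v3) = Sset Xs Ys (Meet v3 (Meet v1 v2))"
      unfolding S PVmeet by (simp add: Int_commute)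
    also have "\<dots> = Sset Xs Ys v3 \<inter> Sset Xs Ys (Meet v1 v2)" by (rule part2[OF that(3)])
    finally have "Sset Xs Ys (Meet (Meet v1 v2) v3) = Sset Xs Ys (Meet v1 v2) \<inter> Sset Xs Ys v3"
      by blast
    also have "Sset Xs Ys (Meet v1 v2) = Sset Xs Ys v1 \<inter> Sset Xs Ys v2"
      by (rule part2[OF that(1)])
    finally show ?thesis .
  qed
  show ?thesis using part1 part2 by blast
qed

end
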